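(* Let $n\ge1$ be fixed and let $f(\boldsymbol{X})$ be a probability density of the joint vector state $\boldsymbol{X}=(x_1,\dots,x_n)$ of $n$ targets, and let $g(\boldsymbol{X})=\mathcal{N}\{\boldsymbol{X};\boldsymbol{\mu},\boldsymbol{\Sigma}\}$ be a Gaussian density. Define $$J(g)=\min_{\tilde f}\ \int\tilde f(\boldsymbol{X})\log\frac{\tilde f(\boldsymbol{X})}{g(\boldsymbol{X})}\,\mathrm{d}\boldsymbol{X}\quad\text{subject to}\quad\sum_{\pi}\tilde f(\pi\boldsymbol{X})=\sum_{\pi}f(\pi\boldsymbol{X})\ \ \forall\boldsymbol{X},$$ the minimum being over probability densities $\tilde f$. Then $$J(g)=\frac{1}{n!}\int\Big[\sum_{\pi}f(\pi\boldsymbol{X})\Big]\log\frac{\sum_{\pi}f(\pi\boldsymbol{X})}{\sum_{\pi}g(\pi\boldsymbol{X})}\,\mathrm{d}\boldsymbol{X}.$$ Consequently, the problem of minimising $\int\tilde f\log(\tilde f/g)\,\mathrm{d}\boldsymbol{X}$ jointly over such $\tilde f$ and Gaussian $g$ is equivalent to minimising the right-hand side over Gaussian $g$.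
   Context: Sums over $\pi$ range over all $n!$ permutations of the $n$ single-target components, and $\pi\boldsymbol{X}$ denotes the vector $\boldsymbol{X}$ with its $n$ single-target components permuted according to $\pi$. *)

theory Defs
  imports "HOL-Analysis.Analysis" "HOL-Combinatorics.Permutations"
begin

text \<open>Joint state of n targets, each with a d-dimensional single-target state:
  a real vector indexed by pairs (k, i), k a coordinate of the single-target state,
  i the target index.  n = CARD('n), d = CARD('d).\<close>
type_synonym ('d, 'n) jstate = "real ^ ('d \<times> 'n)"

definition perm_act :: "('n \<Rightarrow> 'n) \<Rightarrow> ('d::finite, 'n::finite) jstate \<Rightarrow> ('d, 'n) jstate" where
  "perm_act \<pi> X = (\<chi> ki. X $ (fst ki, \<pi> (snd ki)))"

definition sym_sum :: "(('d::finite, 'n::finite) jstate \<Rightarrow> real) \<Rightarrow> ('d, 'n) jstate \<Rightarrow> real" where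
  "sym_sum f X = (\<Sum>\<pi> \<in> {\<pi>. \<pi> permutes (UNIV :: 'n set)}. f (perm_act \<pi> X))"

definition prob_density :: "('a::euclidean_space \<Rightarrow> real) \<Rightarrow> bool" where
  "prob_density p \<longleftrightarrow> p \<in> borel_measurable lborel \<and> (\<forall>x. 0 \<le> p x)
     \<and> (\<integral>\<^sup>+ x. ennreal (p x) \<partial>lborel) = 1"

definition cov_matrix :: "real ^ 'm ^ 'm \<Rightarrow> bool" where
  "cov_matrix S \<longleftrightarrow> transpose S = S \<and> (\<forall>v. v \<noteq> 0 \<longrightarrow> 0 < v \<bullet> (S *v v))"

definition gauss_density :: "real ^ 'm \<Rightarrow> real ^ 'm ^ 'm \<Rightarrow> real ^ 'm \<Rightarrow> real" where
  "gauss_density \<mu> S x =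
     (2 * pi) powr (- real CARD('m) / 2) * det S powr (- 1 / 2)
       * exp (- (1 / 2) * ((x - \<mu>) \<bullet> (matrix_inv S *v (x - \<mu>))))"

text \<open>The functional  int p log (p / q) dX, as an extended real
  (positive part minus negative part; the convention 0 log(0/q) = 0 holds
  since 0 * anything = 0).\<close>
definition rel_ent :: "('a::euclidean_space \<Rightarrow> real) \<Rightarrow> ('a \<Rightarrow> real) \<Rightarrow> ereal" where
  "rel_ent p q =
     enn2ereal (\<integral>\<^sup>+ x. ennreal (p x * ln (p x / q x)) \<partial>lborel)
   - enn2ereal (\<integral>\<^sup>+ x. ennreal (- (p x * ln (p x / q x))) \<partial>lborel)"

definition feasible :: "(('d::finite, 'n::finite) jstate \<Rightarrow> real) \<Rightarrow> (('d, 'n) jstate \<Rightarrow> real) \<Rightarrow> bool" where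
  "feasible f ft \<longleftrightarrow> prob_density ft \<and> (\<forall>X. sym_sum ft X = sym_sum f X)"

end

theory Submission
  imports Defs "HOL-Probability.Distributions"
begin


lemma prod_Basis_cart: "(\<Prod>b\<in>(Basis::(real^'i::finite) set). (x::real^'i) \<bullet> b) = (\<Prod>i\<in>UNIV. x $ i)"
  by (simp add: Basis_vec_def cart_eq_inner_axis axis_eq_axis prod.UNION_disjoint)

lemma lborel_reindex:
  fixes p :: "'i::finite \<Rightarrow> 'i" assumes p: "bij p"
  shows "distr lborel borel (\<lambda>X::real^'i. \<chi> i. X $ p i) = lborel"
proof (rule lborel_eqI[symmetric])
  let ?h = "\<lambda>X::real^'i. \<chi> i. X $ p i"
  have hm[measurable]: "?h \<in> borel \<rightarrow>\<^sub>M borel"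
    by (intro borel_measurable_continuous_onI continuous_intros)
  fix l u :: "real^'i" assume le: "\<And>b. b\<in>Basis \<Longrightarrow> l\<bullet>b \<le> u\<bullet>b"
  have le': "l$i \<le> u$i" for i using le[of "axis i 1"] by (auto simp: cart_eq_inner_axis Basis_vec_def)
  have pre: "?h -` box l u = box (\<chi> j. l $ inv p j) (\<chi> j. u $ inv p j)"
    using p by (auto simp: mem_box_cart bij_inv_eq_iff) (metis bij_inv_eq_iff p)+
  have le'': "\<And>b. b\<in>Basis \<Longrightarrow> (\<chi> j. l $ inv p j)\<bullet>b \<le> (\<chi> j. u $ inv p j)\<bullet>b"
    using le' by (auto simp: Basis_vec_def cart_eq_inner_axis[symmetric] inner_axis)
  have "emeasure (distr lborel borel ?h) (box l u) = emeasure lborel (box (\<chi> j. l $ inv p j) (\<chi> j. u $ inv p j))"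
    by (simp add: emeasure_distr pre)
  also have "\<dots> = (\<Prod>j\<in>UNIV. u $ inv p j - l $ inv p j)"
    using le'' by (simp add: prod_Basis_cart)
  also have "\<dots> = (\<Prod>i\<in>UNIV. u $ i - l $ i)"
    using prod.reindex_bij_betw[OF bij_betw_inv_into[OF p], of "\<lambda>i. u $ i - l $ i"] by simp
  also have "\<dots> = (\<Prod>b\<in>Basis. (u - l) \<bullet> b)" by (simp add: prod_Basis_cart)
  finally show "emeasure (distr lborel borel ?h) (box l u) = (\<Prod>b\<in>Basis. (u - l) \<bullet> b)" .
qed simp


lemma perm_act_comp: "perm_act \<pi> (perm_act \<sigma> X) = perm_act (\<sigma> \<circ> \<pi>) X"
  by (simp add: perm_act_def vec_eq_iff)

lemma perm_act_id[simp]: "perm_act id X = X"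
  by (simp add: perm_act_def vec_eq_iff)

lemma perm_act_alt: "perm_act \<pi> = (\<lambda>X. \<chi> j. X $ (\<lambda>(k,i). (k, \<pi> i)) j)"
  by (auto simp: perm_act_def fun_eq_iff split: prod.splits)

lemma perm_act_measurable[measurable]: "perm_act \<pi> \<in> borel \<rightarrow>\<^sub>M borel"
  unfolding perm_act_alt by (intro borel_measurable_continuous_onI continuous_intros)

lemma nn_perm_inv:
  fixes u :: "('d::finite, 'n::finite) jstate \<Rightarrow> ennreal"
  assumes \<pi>: "\<pi> permutes (UNIV::'n set)" and u[measurable]: "u \<in> borel_measurable borel"
  shows "(\<integral>\<^sup>+X. u (perm_act \<pi> X) \<partial>lborel) = (\<integral>\<^sup>+X. u X \<partial>lborel)"
proof -
  have b: "bij (\<lambda>(k::'d,i). (k, \<pi> i))"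
    by (rule o_bij[where g="\<lambda>(k,i). (k, inv \<pi> i)"])
       (auto simp: fun_eq_iff permutes_inverses[OF \<pi>])
  have "(\<integral>\<^sup>+X. u X \<partial>lborel) = (\<integral>\<^sup>+X. u X \<partial>distr lborel borel (perm_act \<pi>))"
    unfolding perm_act_alt using lborel_reindex[OF b] by simp
  also have "\<dots> = (\<integral>\<^sup>+X. u (perm_act \<pi> X) \<partial>lborel)"
    by (simp add: nn_integral_distr)
  finally show ?thesis ..
qed

lemma sym_sum_perm:
  assumes \<pi>: "\<pi> permutes (UNIV::'n set)"
  shows "sym_sum h (perm_act \<pi> (X::('d::finite, 'n::finite) jstate)) = sym_sum h X"
  unfolding sym_sum_def perm_act_comp
  using setum_permutations_compose_left[OF \<pi>, of "\<lambda>p. h (perm_act p X)"] by simp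

lemma sym_sum_measurable[measurable]:
  "h \<in> borel_measurable borel \<Longrightarrow> sym_sum h \<in> borel_measurable borel"
  unfolding sym_sum_def
  by (intro borel_measurable_sum) (rule measurable_compose[OF perm_act_measurable])

lemma card_P: "card {\<pi>. \<pi> permutes (UNIV::'n::finite set)} = fact CARD('n)"
  by (rule card_permutations) auto

lemma finite_P: "finite {\<pi>. \<pi> permutes (UNIV::'n::finite set)}"
  by (rule finite_permutations) auto

lemma nn_sym:
  fixes u :: "('d::finite, 'n::finite) jstate \<Rightarrow> ennreal"
  assumes u[measurable]: "u \<in> borel_measurable borel"
  shows "(\<integral>\<^sup>+X. (\<Sum>\<pi>\<in>{\<pi>. \<pi> permutes (UNIV::'n set)}. u (perm_act \<pi> X)) \<partial>lborel)
     = of_nat (fact CARD('n)) * (\<integral>\<^sup>+X. u X \<partial>lborel)"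
proof -
  have "(\<integral>\<^sup>+X. (\<Sum>\<pi>\<in>{\<pi>. \<pi> permutes (UNIV::'n set)}. u (perm_act \<pi> X)) \<partial>lborel)
     = (\<Sum>\<pi>\<in>{\<pi>. \<pi> permutes (UNIV::'n set)}. \<integral>\<^sup>+X. u (perm_act \<pi> X) \<partial>lborel)"
    by (rule nn_integral_sum) simp
  also have "\<dots> = (\<Sum>\<pi>\<in>{\<pi>. \<pi> permutes (UNIV::'n set)}. \<integral>\<^sup>+X. u X \<partial>lborel)"
    by (intro sum.cong refl) (simp add: nn_perm_inv)
  also have "\<dots> = of_nat (fact CARD('n)) * (\<integral>\<^sup>+X. u X \<partial>lborel)"
    by (simp add: card_P)
  finally show ?thesis .
qed

lemma key:
  fixes ft :: "('d::finite, 'n::finite) jstate \<Rightarrow> real" and h :: "('d, 'n) jstate \<Rightarrow> ennreal"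
  assumes ft[measurable]: "ft \<in> borel_measurable borel" and nn: "\<And>X. 0 \<le> ft X"
    and h[measurable]: "h \<in> borel_measurable borel"
    and hs: "\<And>\<pi> X. \<pi> permutes (UNIV::'n set) \<Longrightarrow> h (perm_act \<pi> X) = h X"
  shows "of_nat (fact CARD('n)) * (\<integral>\<^sup>+X. ennreal (ft X) * h X \<partial>lborel)
       = (\<integral>\<^sup>+X. ennreal (sym_sum ft X) * h X \<partial>lborel)"
proof -
  have "(\<integral>\<^sup>+X. ennreal (sym_sum ft X) * h X \<partial>lborel)
     = (\<integral>\<^sup>+X. (\<Sum>\<pi>\<in>{\<pi>. \<pi> permutes (UNIV::'n set)}. ennreal (ft (perm_act \<pi> X)) * h (perm_act \<pi> X)) \<partial>lborel)"
  proof (intro nn_integral_cong)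
    fix X
    have "(\<Sum>\<pi>\<in>{\<pi>. \<pi> permutes (UNIV::'n set)}. ennreal (ft (perm_act \<pi> X)) * h (perm_act \<pi> X))
       = (\<Sum>\<pi>\<in>{\<pi>. \<pi> permutes (UNIV::'n set)}. ennreal (ft (perm_act \<pi> X)) * h X)"
      by (intro sum.cong refl) (simp add: hs)
    also have "\<dots> = (\<Sum>\<pi>\<in>{\<pi>. \<pi> permutes (UNIV::'n set)}. ennreal (ft (perm_act \<pi> X))) * h X"
      by (simp only: sum_distrib_right)
    also have "\<dots> = ennreal (sym_sum ft X) * h X"
      by (simp add: sym_sum_def nn)
    finally show "ennreal (sym_sum ft X) * h X = (\<Sum>\<pi>\<in>{\<pi>. \<pi> permutes (UNIV::'n set)}. ennreal (ft (perm_act \<pi> X)) * h (perm_act \<pi> X))" ..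
  qed
  also have "\<dots> = of_nat (fact CARD('n)) * (\<integral>\<^sup>+X. ennreal (ft X) * h X \<partial>lborel)"
    by (rule nn_sym) simp
  finally show ?thesis ..
qed



lemma enn2ereal_cmult: "0 \<le> c \<Longrightarrow> enn2ereal (ennreal c * a) = ereal c * enn2ereal a"
  by (simp add: times_ennreal.rep_eq)

lemma ereal_cmult_diff:
  assumes "0 < c"
  shows "ereal c * enn2ereal a - ereal c * enn2ereal b = ereal c * (enn2ereal a - enn2ereal b)"
proof -
  have "0 \<le> enn2ereal a" "0 \<le> enn2ereal b" by auto
  then show ?thesis using assms
    by (cases "enn2ereal a"; cases "enn2ereal b") (auto simp: algebra_simps)
qed

lemma ereal_cancel_helper:
  fixes a1 a2 b1 b2 :: ennreal
  assumes "a2 + b1 \<le> a1 + b2" "a2 < \<infinity>" "b2 < \<infinity>"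
  shows "enn2ereal b1 - enn2ereal b2 \<le> enn2ereal a1 - enn2ereal a2"
proof -
  have "enn2ereal a2 + enn2ereal b1 \<le> enn2ereal a1 + enn2ereal b2"
    using assms(1) by (simp add: plus_ennreal.rep_eq[symmetric] less_eq_ennreal.rep_eq[symmetric])
  moreover have "0 \<le> enn2ereal a1" "0 \<le> enn2ereal a2" "0 \<le> enn2ereal b1" "0 \<le> enn2ereal b2" by auto
  moreover have "enn2ereal a2 \<noteq> \<infinity>" "enn2ereal b2 \<noteq> \<infinity>" using assms(2,3)
    by (auto simp: less_top[symmetric] enn2ereal_eq_top_iff)
  ultimately show ?thesis
    by (cases "enn2ereal a1"; cases "enn2ereal a2"; cases "enn2ereal b1"; cases "enn2ereal b2") auto
qed

lemma div_helper:
  fixes A B :: ennreal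
  assumes "of_nat (fact n) * A = B"
  shows "A = ennreal (1 / fact n) * B"
proof -
  have "ennreal (1 / fact n) * of_nat (fact n) = 1"
    by (simp add: ennreal_of_nat_eq_real_of_nat ennreal_mult[symmetric])
  then show ?thesis using assms[symmetric] by (simp add: mult.assoc[symmetric])
qed

lemma enn_ineq:
  fixes a b c d :: real
  assumes "c - d \<le> a - b" "0 \<le> c" "0 \<le> d"
  shows "ennreal (-a) + ennreal b + ennreal c \<le> ennreal a + ennreal (-b) + ennreal d"
proof -
  have e: "ennreal x = ennreal (max x 0)" for x by (cases "0 \<le> x") (auto simp: ennreal_neg max_def)
  have "ennreal (-a) + ennreal b + ennreal c = ennreal (max (-a) 0 + max b 0 + c)"
    by (subst e[of "-a"], subst e[of b]) (simp add: assms)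
  also have "\<dots> \<le> ennreal (max a 0 + max (-b) 0 + d)"
    using assms by (intro ennreal_leI) (auto simp: max_def)
  also have "\<dots> = ennreal a + ennreal (-b) + ennreal d"
    by (subst e[of a], subst e[of "-b"]) (simp add: assms)
  finally show ?thesis .
qed

lemma gibbs:
  fixes p q :: real assumes "0 \<le> p" "0 < q"
  shows "p - q \<le> p * ln (p / q)"
proof (cases "p = 0")
  case True then show ?thesis using assms by simp
next
  case False
  then have p: "0 < p" using assms by simp
  have "ln (q / p) \<le> q / p - 1" using p assms by (intro ln_le_minus_one) simp
  moreover have "ln (p / q) = - ln (q / p)" using p assms by (simp add: ln_div)
  ultimately have "1 - q / p \<le> ln (p / q)" by simp
  then have "p * (1 - q / p) \<le> p * ln (p / q)" using p by (intro mult_left_mono) auto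
  then show ?thesis using p by (simp add: algebra_simps)
qed



lemma cov_facts:
  fixes S :: "real ^ 'm::finite ^ 'm"
  assumes S: "cov_matrix S"
  shows "det S \<noteq> 0" "\<And>v. v \<noteq> 0 \<Longrightarrow> 0 < v \<bullet> (matrix_inv S *v v)"
proof -
  have pd: "\<And>v. v \<noteq> 0 \<Longrightarrow> 0 < v \<bullet> (S *v v)" using S by (simp add: cov_matrix_def)
  have ker: "\<forall>x. S *v x = 0 \<longrightarrow> x = 0"
    using pd by (metis inner_zero_right less_irrefl)
  then obtain B where "B ** S = mat 1" using matrix_left_invertible_ker by blast
  then have invS: "invertible S" using invertible_left_inverse by blast
  then show "det S \<noteq> 0" by (simp add: invertible_det_nz)
  have inv: "S ** matrix_inv S = mat 1 \<and> matrix_inv S ** S = mat 1"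
    using invS unfolding invertible_def matrix_inv_def by (rule someI_ex)
  fix v :: "real^'m" assume v: "v \<noteq> 0"
  define w where "w = matrix_inv S *v v"
  have vw: "v = S *v w" unfolding w_def matrix_vector_mul_assoc using inv by simp
  have "w \<noteq> 0" using v vw by auto
  then have "0 < w \<bullet> (S *v w)" by (rule pd)
  moreover have "v \<bullet> (matrix_inv S *v v) = w \<bullet> (S *v w)"
    unfolding w_def[symmetric] by (subst vw) (simp add: inner_commute)
  ultimately show "0 < v \<bullet> (matrix_inv S *v v)" by simp
qed

lemma quad_lower:
  fixes A :: "real ^ 'm::finite ^ 'm"
  assumes pd: "\<And>v. v \<noteq> 0 \<Longrightarrow> 0 < v \<bullet> (A *v v)"
  shows "\<exists>c>0. \<forall>v. c * (norm v)\<^sup>2 \<le> v \<bullet> (A *v v)"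
proof -
  let ?q = "\<lambda>v. v \<bullet> (A *v v)"
  have "continuous_on (sphere 0 1) ?q" by (intro continuous_intros)
  then obtain x0 where x0: "x0 \<in> sphere 0 1" and mn: "\<And>y. y \<in> sphere 0 1 \<Longrightarrow> ?q x0 \<le> ?q y"
    using continuous_attains_inf[of "sphere (0::real^'m) 1" ?q] by auto
  have "x0 \<noteq> 0" using x0 by auto
  then have c: "0 < ?q x0" using pd by blast
  show ?thesis
  proof (intro exI[of _ "?q x0"] conjI allI c)
    fix v :: "real^'m"
    show "?q x0 * (norm v)\<^sup>2 \<le> ?q v"
    proof (cases "v = 0")
      case True then show ?thesis by simp
    next
      case False
      define u where "u = (1 / norm v) *\<^sub>R v"
      have u: "u \<in> sphere 0 1" using False by (simp add: u_def)
      have vu: "v = norm v *\<^sub>R u" using False by (simp add: u_def)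
      have "?q v = (norm v)\<^sup>2 * ?q u"
        by (subst (1 2) vu) (simp add: matrix_vector_mult_scaleR power2_eq_square)
      then show ?thesis using mn[OF u] by (simp add: mult_right_mono mult.commute[of "(norm v)\<^sup>2"])
    qed
  qed
qed


lemma gauss1d:
  assumes a: "0 < (a::real)"
  shows "(\<integral>\<^sup>+t. ennreal (exp (- a * t\<^sup>2)) \<partial>lborel) < \<infinity>"
proof -
  define \<sigma> where "\<sigma> = sqrt (1 / (2 * a))"
  have sp: "0 < \<sigma>" using a by (simp add: \<sigma>_def)
  have s2: "\<sigma>\<^sup>2 = 1 / (2 * a)" using a by (simp add: \<sigma>_def)
  have eq: "exp (- (a * t\<^sup>2)) = sqrt (2 * pi * \<sigma>\<^sup>2) * normal_density 0 \<sigma> t" for t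
    using a by (simp add: normal_density_def s2 field_simps)
  have "(\<integral>\<^sup>+t. ennreal (exp (- a * t\<^sup>2)) \<partial>lborel)
      = (\<integral>\<^sup>+t. ennreal (sqrt (2 * pi * \<sigma>\<^sup>2)) * ennreal (normal_density 0 \<sigma> t) \<partial>lborel)"
    by (intro nn_integral_cong) (simp add: eq ennreal_mult)
  also have "\<dots> = ennreal (sqrt (2 * pi * \<sigma>\<^sup>2)) * (\<integral>\<^sup>+t. ennreal (normal_density 0 \<sigma> t) \<partial>lborel)"
    by (rule nn_integral_cmult) simp
  also have "(\<integral>\<^sup>+t. ennreal (normal_density 0 \<sigma> t) \<partial>lborel) = ennreal 1"
    using sp by (subst nn_integral_eq_integral) (auto intro: integrable_normal_density simp: integral_normal_density)
  finally show ?thesis by (simp add: ennreal_mult[symmetric])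
qed

lemma gaussnd:
  assumes a: "0 < (a::real)"
  shows "(\<integral>\<^sup>+x. ennreal (exp (- a * (norm (x::'e::euclidean_space))\<^sup>2)) \<partial>lborel) < \<infinity>"
proof -
  have "(\<integral>\<^sup>+x. ennreal (exp (- a * (norm (x::'e))\<^sup>2)) \<partial>lborel)
     = (\<integral>\<^sup>+x. (\<Prod>b\<in>Basis. ennreal (exp (- a * (x \<bullet> b)\<^sup>2))) \<partial>(lborel::'e measure))"
  proof (rule nn_integral_cong)
    fix x :: 'e
    have "(norm x)\<^sup>2 = (\<Sum>b\<in>Basis. (x \<bullet> b)\<^sup>2)"
      unfolding power2_norm_eq_inner by (subst euclidean_inner) (simp add: power2_eq_square)
    then have "exp (- a * (norm x)\<^sup>2) = (\<Prod>b\<in>Basis. exp (- a * (x \<bullet> b)\<^sup>2))"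
      by (simp add: sum_distrib_left exp_sum[symmetric])
    then show "ennreal (exp (- a * (norm x)\<^sup>2)) = (\<Prod>b\<in>Basis. ennreal (exp (- a * (x \<bullet> b)\<^sup>2)))"
      by (simp add: prod_ennreal)
  qed
  also have "\<dots> = (\<Prod>b\<in>(Basis::'e set). \<integral>\<^sup>+t. ennreal (exp (- a * t\<^sup>2)) \<partial>lborel)"
    using nn_integral_lborel_prod[of "\<lambda>b t. ennreal (exp (- a * t\<^sup>2))"] by simp
  also have "\<dots> < \<infinity>"
    using gauss1d[OF a] by (simp add: power_less_top_ennreal)
  finally show ?thesis .
qed


lemma cont_mv[continuous_intros]:
  "continuous_on s g \<Longrightarrow> continuous_on s (\<lambda>x. (A::real^'a::finite^'b::finite) *v g x)"
  by (rule continuous_on_compose2[OF matrix_vector_mult_linear_continuous_on]) auto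

lemma gauss_meas[measurable]: "gauss_density \<mu> S \<in> borel_measurable borel"
  unfolding gauss_density_def[abs_def]
  by (intro borel_measurable_continuous_onI continuous_intros)

lemma gauss_pos:
  assumes S: "cov_matrix S"
  shows "0 < gauss_density \<mu> S x"
  using cov_facts(1)[OF S] by (simp add: gauss_density_def)

lemma gauss_int:
  fixes \<mu> :: "real^'m::finite"
  assumes S: "cov_matrix S"
  shows "(\<integral>\<^sup>+x. ennreal (gauss_density \<mu> S x) \<partial>lborel) < \<infinity>"
proof -
  obtain c where c: "0 < c" and cq: "\<And>v. c * (norm v)\<^sup>2 \<le> v \<bullet> (matrix_inv S *v v)"
    using quad_lower[OF cov_facts(2)[OF S]] by blast
  define K where "K = (2 * pi) powr (- real CARD('m) / 2) * det S powr (- 1 / 2)"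
  have K: "0 < K" using cov_facts(1)[OF S] by (simp add: K_def)
  have le: "gauss_density \<mu> S x \<le> K * exp (- (c/2) * (norm (x - \<mu>))\<^sup>2)" for x
  proof -
    have "- (1 / 2) * ((x - \<mu>) \<bullet> (matrix_inv S *v (x - \<mu>))) \<le> - (c/2) * (norm (x - \<mu>))\<^sup>2"
      using cq[of "x - \<mu>"] by simp
    then show ?thesis unfolding gauss_density_def K_def[symmetric]
      using K by (intro mult_left_mono) auto
  qed
  define u where "u = (\<lambda>x::real^'m. ennreal (exp (- (c/2) * (norm x)\<^sup>2)))"
  have um[measurable]: "u \<in> borel_measurable borel" unfolding u_def by measurable
  have shift: "(\<integral>\<^sup>+x. u (x - \<mu>) \<partial>lborel) = (\<integral>\<^sup>+x. u x \<partial>lborel)"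
  proof -
    have "(\<integral>\<^sup>+x. u (x - \<mu>) \<partial>lborel) = (\<integral>\<^sup>+x. u (x - \<mu>) \<partial>(distr lborel borel ((+) \<mu>)))"
      by (simp add: lborel_distr_plus)
    also have "\<dots> = (\<integral>\<^sup>+x. u ((\<mu> + x) - \<mu>) \<partial>lborel)"
      by (rule nn_integral_distr) auto
    finally show ?thesis by simp
  qed
  have "(\<integral>\<^sup>+x. ennreal (gauss_density \<mu> S x) \<partial>lborel) \<le> (\<integral>\<^sup>+x. ennreal K * u (x - \<mu>) \<partial>lborel)"
    using le K by (intro nn_integral_mono) (simp add: u_def ennreal_mult[symmetric])
  also have "\<dots> = ennreal K * (\<integral>\<^sup>+x. u (x - \<mu>) \<partial>lborel)"
    by (rule nn_integral_cmult) simp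
  also have "\<dots> < \<infinity>"
    unfolding shift using gaussnd[of "c/2", where 'e="real^'m"] c
    by (simp add: u_def ennreal_mult_less_top)
  finally show ?thesis .
qed



context
  fixes f G :: "('d::finite, 'n::finite) jstate \<Rightarrow> real"
  assumes f: "prob_density f" and Gm[measurable]: "G \<in> borel_measurable borel"
    and Gp: "\<And>X. 0 < G X" and Gi: "(\<integral>\<^sup>+X. ennreal (G X) \<partial>lborel) < \<infinity>"
begin

lemma fm[measurable]: "f \<in> borel_measurable borel"
  and fnn: "0 \<le> f X" and fint: "(\<integral>\<^sup>+X. ennreal (f X) \<partial>lborel) = 1"
  using f by (auto simp: prob_density_def)

lemma id_P: "id \<in> {\<pi>. \<pi> permutes (UNIV::'n set)}" by (simp add: permutes_id)

lemma F_nn: "0 \<le> sym_sum f X"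
  unfolding sym_sum_def by (intro sum_nonneg) (simp add: fnn)

lemma Gs_pos: "0 < sym_sum G X"
  unfolding sym_sum_def
proof (rule sum_pos)
  show "{\<pi>. \<pi> permutes (UNIV::'n set)} \<noteq> {}" using id_P by blast
qed (auto simp: Gp finite_P)

lemma Gs_int: "(\<integral>\<^sup>+X. ennreal (sym_sum G X) \<partial>lborel) < \<infinity>"
proof -
  have "(\<integral>\<^sup>+X. ennreal (sym_sum G X) \<partial>lborel)
      = (\<integral>\<^sup>+X. (\<Sum>\<pi>\<in>{\<pi>. \<pi> permutes (UNIV::'n set)}. ennreal (G (perm_act \<pi> X))) \<partial>lborel)"
    unfolding sym_sum_def by (intro nn_integral_cong) (simp add: less_imp_le[OF Gp])
  also have "\<dots> = of_nat (fact CARD('n)) * (\<integral>\<^sup>+X. ennreal (G X) \<partial>lborel)"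
    by (rule nn_sym) simp
  also have "\<dots> < \<infinity>" using Gi
    by (simp add: ennreal_of_nat_eq_real_of_nat ennreal_mult_less_top)
  finally show ?thesis .
qed

lemma keyL:
  fixes ft :: "('d, 'n) jstate \<Rightarrow> real"
  assumes ft[measurable]: "ft \<in> borel_measurable borel" and nn: "\<And>X. 0 \<le> ft X"
    and sy: "\<And>X. sym_sum ft X = sym_sum f X"
  shows "(\<integral>\<^sup>+X. ennreal (ft X * ln (sym_sum f X / sym_sum G X)) \<partial>lborel)
      = ennreal (1 / fact CARD('n)) * (\<integral>\<^sup>+X. ennreal (sym_sum f X * ln (sym_sum f X / sym_sum G X)) \<partial>lborel)"
    and "(\<integral>\<^sup>+X. ennreal (- (ft X * ln (sym_sum f X / sym_sum G X))) \<partial>lborel)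
      = ennreal (1 / fact CARD('n)) * (\<integral>\<^sup>+X. ennreal (- (sym_sum f X * ln (sym_sum f X / sym_sum G X))) \<partial>lborel)"
proof -
  let ?L = "\<lambda>X. ln (sym_sum f X / sym_sum G X)"
  have Lm[measurable]: "?L \<in> borel_measurable borel" by measurable
  have Ls: "?L (perm_act \<pi> X) = ?L X" if "\<pi> permutes UNIV" for \<pi> X
    using that by (simp add: sym_sum_perm)
  show "(\<integral>\<^sup>+X. ennreal (ft X * ?L X) \<partial>lborel)
      = ennreal (1 / fact CARD('n)) * (\<integral>\<^sup>+X. ennreal (sym_sum f X * ?L X) \<partial>lborel)"
  proof (rule div_helper)
    have "of_nat (fact CARD('n)) * (\<integral>\<^sup>+X. ennreal (ft X) * ennreal (?L X) \<partial>lborel)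
       = (\<integral>\<^sup>+X. ennreal (sym_sum ft X) * ennreal (?L X) \<partial>lborel)"
      by (rule key) (auto simp: nn Ls)
    then show "of_nat (fact CARD('n)) * (\<integral>\<^sup>+X. ennreal (ft X * ?L X) \<partial>lborel)
       = (\<integral>\<^sup>+X. ennreal (sym_sum f X * ?L X) \<partial>lborel)"
      by (simp add: ennreal_mult' nn F_nn sy)
  qed
  show "(\<integral>\<^sup>+X. ennreal (- (ft X * ?L X)) \<partial>lborel)
      = ennreal (1 / fact CARD('n)) * (\<integral>\<^sup>+X. ennreal (- (sym_sum f X * ?L X)) \<partial>lborel)"
  proof (rule div_helper)
    have "of_nat (fact CARD('n)) * (\<integral>\<^sup>+X. ennreal (ft X) * ennreal (- ?L X) \<partial>lborel)
       = (\<integral>\<^sup>+X. ennreal (sym_sum ft X) * ennreal (- ?L X) \<partial>lborel)"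
      by (rule key) (auto simp: nn Ls)
    then show "of_nat (fact CARD('n)) * (\<integral>\<^sup>+X. ennreal (- (ft X * ?L X)) \<partial>lborel)
       = (\<integral>\<^sup>+X. ennreal (- (sym_sum f X * ?L X)) \<partial>lborel)"
      by (simp add: ennreal_mult'[symmetric] nn F_nn sy)
  qed
qed

lemma rel_sym:
  fixes ft :: "('d, 'n) jstate \<Rightarrow> real"
  assumes ft[measurable]: "ft \<in> borel_measurable borel" and nn: "\<And>X. 0 \<le> ft X"
    and sy: "\<And>X. sym_sum ft X = sym_sum f X"
  shows "enn2ereal (\<integral>\<^sup>+X. ennreal (ft X * ln (sym_sum f X / sym_sum G X)) \<partial>lborel)
       - enn2ereal (\<integral>\<^sup>+X. ennreal (- (ft X * ln (sym_sum f X / sym_sum G X))) \<partial>lborel)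
       = ereal (1 / fact CARD('n)) * rel_ent (sym_sum f) (sym_sum G)"
  unfolding keyL[OF assms] rel_ent_def
  by (simp add: enn2ereal_cmult ereal_cmult_diff)

definition Topt :: "('d, 'n) jstate \<Rightarrow> real" where
  "Topt X = sym_sum f X * G X / sym_sum G X"

lemma Tm[measurable]: "Topt \<in> borel_measurable borel"
  unfolding Topt_def[abs_def] by measurable

lemma Tnn: "0 \<le> Topt X"
  using F_nn[of X] Gp[of X] Gs_pos[of X] by (simp add: Topt_def)

lemma Tsym: "sym_sum Topt X = sym_sum f X"
proof -
  have "sym_sum Topt X = (\<Sum>\<pi>\<in>{\<pi>. \<pi> permutes (UNIV::'n set)}. Topt (perm_act \<pi> X))"
    by (simp add: sym_sum_def[of Topt])
  also have "\<dots> = (\<Sum>\<pi>\<in>{\<pi>. \<pi> permutes (UNIV::'n set)}. sym_sum f X / sym_sum G X * G (perm_act \<pi> X))"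
    by (intro sum.cong refl) (simp add: Topt_def sym_sum_perm)
  also have "\<dots> = sym_sum f X / sym_sum G X * (\<Sum>\<pi>\<in>{\<pi>. \<pi> permutes (UNIV::'n set)}. G (perm_act \<pi> X))"
    by (simp add: sum_distrib_left)
  also have "\<dots> = sym_sum f X / sym_sum G X * sym_sum G X"
    by (simp only: sym_sum_def[of G X, symmetric])
  also have "\<dots> = sym_sum f X" using Gs_pos[of X] by simp
  finally show ?thesis .
qed

lemma fact_inv: "ennreal (1 / fact n) * of_nat (fact n) = 1"
  by (simp add: ennreal_of_nat_eq_real_of_nat ennreal_mult[symmetric])

lemma F_int: "(\<integral>\<^sup>+X. ennreal (sym_sum f X) \<partial>lborel) = of_nat (fact CARD('n))"
proof -
  have "(\<integral>\<^sup>+X. ennreal (sym_sum f X) \<partial>lborel)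
      = (\<integral>\<^sup>+X. (\<Sum>\<pi>\<in>{\<pi>. \<pi> permutes (UNIV::'n set)}. ennreal (f (perm_act \<pi> X))) \<partial>lborel)"
    unfolding sym_sum_def by (intro nn_integral_cong) (simp add: fnn)
  also have "\<dots> = of_nat (fact CARD('n)) * (\<integral>\<^sup>+X. ennreal (f X) \<partial>lborel)"
    by (rule nn_sym) simp
  finally show ?thesis by (simp add: fint)
qed

lemma Tint: "(\<integral>\<^sup>+X. ennreal (Topt X) \<partial>lborel) = 1"
proof -
  have "of_nat (fact CARD('n)) * (\<integral>\<^sup>+X. ennreal (Topt X) * 1 \<partial>lborel)
     = (\<integral>\<^sup>+X. ennreal (sym_sum Topt X) * 1 \<partial>lborel)"
    by (rule key) (auto simp: Tnn)
  then have "of_nat (fact CARD('n)) * (\<integral>\<^sup>+X. ennreal (Topt X) \<partial>lborel) = of_nat (fact CARD('n))"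
    by (simp add: Tsym F_int)
  from div_helper[OF this] fact_inv[of "CARD('n)"] show ?thesis by simp
qed

lemma T_feasible: "feasible f Topt"
  unfolding feasible_def prob_density_def using Tnn Tint Tsym by auto

lemma part1: "rel_ent Topt G = ereal (1 / fact CARD('n)) * rel_ent (sym_sum f) (sym_sum G)"
proof -
  have eq: "Topt X * ln (Topt X / G X) = Topt X * ln (sym_sum f X / sym_sum G X)" for X
  proof (cases "sym_sum f X = 0")
    case True then show ?thesis by (simp add: Topt_def)
  next
    case False
    have "Topt X / G X = sym_sum f X / sym_sum G X"
      using Gp[of X] Gs_pos[of X] by (simp add: Topt_def field_simps)
    then show ?thesis by simp
  qed
  show ?thesis
    unfolding rel_ent_def eq using rel_sym[OF Tm Tnn Tsym] by (simp add: rel_ent_def)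
qed

lemma part2:
  assumes fe: "feasible f ft"
  shows "ereal (1 / fact CARD('n)) * rel_ent (sym_sum f) (sym_sum G) \<le> rel_ent ft G"
proof -
  have ftm[measurable]: "ft \<in> borel_measurable borel" and ftnn: "\<And>X. 0 \<le> ft X"
    and ftint: "(\<integral>\<^sup>+X. ennreal (ft X) \<partial>lborel) = 1" and sy: "\<And>X. sym_sum ft X = sym_sum f X"
    using fe by (auto simp: feasible_def prob_density_def)
  define A where "A X = ft X * ln (ft X / G X)" for X
  define B where "B X = ft X * ln (sym_sum f X / sym_sum G X)" for X
  have Am[measurable]: "A \<in> borel_measurable borel" unfolding A_def[abs_def] by measurable
  have Bm[measurable]: "B \<in> borel_measurable borel" unfolding B_def[abs_def] by measurable
  have pw: "ft X - Topt X \<le> A X - B X" for X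
  proof (cases "ft X = 0")
    case True then show ?thesis using Tnn[of X] by (simp add: A_def B_def)
  next
    case False
    then have p: "0 < ft X" using ftnn[of X] by simp
    have "ft X \<le> sym_sum ft X"
      unfolding sym_sum_def using member_le_sum[OF id_P, of "\<lambda>\<pi>. ft (perm_act \<pi> X)"] finite_P ftnn
      by simp
    then have Fp: "0 < sym_sum f X" using p sy by simp
    have Gx: "0 < G X" "0 < sym_sum G X" using Gp Gs_pos by auto
    have Tp: "0 < Topt X" using Fp Gx by (simp add: Topt_def)
    have lnq: "ln (ft X / Topt X) = ln (ft X / G X) - ln (sym_sum f X / sym_sum G X)"
      using p Fp Gx by (simp add: Topt_def ln_div ln_mult)
    have "A X - B X = ft X * ln (ft X / Topt X)"
      unfolding A_def B_def lnq by (simp add: right_diff_distrib)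
    then show ?thesis using gibbs[OF ftnn Tp] by simp
  qed
  let ?a1 = "\<integral>\<^sup>+X. ennreal (A X) \<partial>lborel"
  let ?a2 = "\<integral>\<^sup>+X. ennreal (- A X) \<partial>lborel"
  let ?b1 = "\<integral>\<^sup>+X. ennreal (B X) \<partial>lborel"
  let ?b2 = "\<integral>\<^sup>+X. ennreal (- B X) \<partial>lborel"
  have "(\<integral>\<^sup>+X. ennreal (- A X) + ennreal (B X) + ennreal (ft X) \<partial>lborel)
      \<le> (\<integral>\<^sup>+X. ennreal (A X) + ennreal (- B X) + ennreal (Topt X) \<partial>lborel)"
    by (intro nn_integral_mono enn_ineq pw ftnn Tnn)
  then have "?a2 + ?b1 + 1 \<le> ?a1 + ?b2 + 1"
    by (simp add: nn_integral_add ftint Tint)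
  then have le: "?a2 + ?b1 \<le> ?a1 + ?b2"
    by (simp add: add.commute[of _ 1] ennreal_add_left_cancel_le add.assoc)
  have a2: "?a2 < \<infinity>"
  proof -
    have "?a2 \<le> (\<integral>\<^sup>+X. ennreal (G X) \<partial>lborel)"
    proof (intro nn_integral_mono ennreal_leI)
      fix X
      show "- A X \<le> G X" using gibbs[OF ftnn Gp, of X X] ftnn[of X] by (simp add: A_def)
    qed
    then show ?thesis using Gi by (simp add: le_less_trans)
  qed
  have b2: "?b2 < \<infinity>"
  proof -
    have "?b2 = ennreal (1 / fact CARD('n)) * (\<integral>\<^sup>+X. ennreal (- (sym_sum f X * ln (sym_sum f X / sym_sum G X))) \<partial>lborel)"
      unfolding B_def by (rule keyL(2)[OF ftm ftnn sy])
    also have "\<dots> \<le> ennreal (1 / fact CARD('n)) * (\<integral>\<^sup>+X. ennreal (sym_sum G X) \<partial>lborel)"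
    proof (intro mult_left_mono nn_integral_mono ennreal_leI)
      fix X
      show "- (sym_sum f X * ln (sym_sum f X / sym_sum G X)) \<le> sym_sum G X"
        using gibbs[OF F_nn Gs_pos, of X X] F_nn[of X] by simp
    qed simp
    also have "\<dots> < \<infinity>" using Gs_int by (simp add: ennreal_mult_less_top)
    finally show ?thesis .
  qed
  have "enn2ereal ?b1 - enn2ereal ?b2 \<le> enn2ereal ?a1 - enn2ereal ?a2"
    by (rule ereal_cancel_helper[OF le a2 b2])
  then show ?thesis
    using rel_sym[OF ftm ftnn sy] unfolding rel_ent_def[of ft G] A_def B_def by simp
qed

end


theorem theorem7:
  fixes f :: "('d::finite, 'n::finite) jstate \<Rightarrow> real"
    and \<mu> :: "('d, 'n) jstate"
    and S :: "real ^ ('d \<times> 'n) ^ ('d \<times> 'n)"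
  assumes f: "prob_density f"
    and S: "cov_matrix S"
  shows "(\<exists>ft. feasible f ft \<and>
            rel_ent ft (gauss_density \<mu> S)
              = ereal (1 / fact CARD('n)) * rel_ent (sym_sum f) (sym_sum (gauss_density \<mu> S)))
       \<and> (\<forall>ft. feasible f ft \<longrightarrow>
            ereal (1 / fact CARD('n)) * rel_ent (sym_sum f) (sym_sum (gauss_density \<mu> S))
              \<le> rel_ent ft (gauss_density \<mu> S))
       \<and> (INF p \<in> {(ft, m, C). feasible f ft \<and> cov_matrix C}.
            rel_ent (fst p) (gauss_density (fst (snd p)) (snd (snd p))))
         = (INF q \<in> {(m, C). cov_matrix C}.
            ereal (1 / fact CARD('n)) * rel_ent (sym_sum f) (sym_sum (gauss_density (fst q) (snd q))))"
proof -
  have P1: "feasible f (Topt f (gauss_density m C)) \<and> rel_ent (Topt f (gauss_density m C)) (gauss_density m C)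
      = ereal (1 / fact CARD('n)) * rel_ent (sym_sum f) (sym_sum (gauss_density m C))"
    if C: "cov_matrix C" for m :: "('d, 'n) jstate" and C
    using T_feasible[OF f gauss_meas gauss_pos[OF C] gauss_int[OF C]]
      part1[OF f gauss_meas gauss_pos[OF C] gauss_int[OF C]] by blast
  have P2: "ereal (1 / fact CARD('n)) * rel_ent (sym_sum f) (sym_sum (gauss_density m C)) \<le> rel_ent ft (gauss_density m C)"
    if C: "cov_matrix C" and fe: "feasible f ft" for m :: "('d, 'n) jstate" and C ft
    using part2[OF f gauss_meas gauss_pos[OF C] gauss_int[OF C] fe] .
  show ?thesis
  proof (intro conjI)
    show "\<exists>ft. feasible f ft \<and> rel_ent ft (gauss_density \<mu> S)
              = ereal (1 / fact CARD('n)) * rel_ent (sym_sum f) (sym_sum (gauss_density \<mu> S))"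
      using P1[OF S] by blast
    show "\<forall>ft. feasible f ft \<longrightarrow>
            ereal (1 / fact CARD('n)) * rel_ent (sym_sum f) (sym_sum (gauss_density \<mu> S))
              \<le> rel_ent ft (gauss_density \<mu> S)"
      using P2[OF S] by blast
    show "(INF p \<in> {(ft, m, C). feasible f ft \<and> cov_matrix C}.
            rel_ent (fst p) (gauss_density (fst (snd p)) (snd (snd p))))
         = (INF q \<in> {(m, C). cov_matrix C}.
            ereal (1 / fact CARD('n)) * rel_ent (sym_sum f) (sym_sum (gauss_density (fst q) (snd q))))"
    proof (rule antisym)
      show "(INF p \<in> {(ft, m, C). feasible f ft \<and> cov_matrix C}.
            rel_ent (fst p) (gauss_density (fst (snd p)) (snd (snd p))))
         \<le> (INF q \<in> {(m, C). cov_matrix C}.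
            ereal (1 / fact CARD('n)) * rel_ent (sym_sum f) (sym_sum (gauss_density (fst q) (snd q))))"
      proof (rule INF_greatest)
        fix q :: "('d, 'n) jstate \<times> (real ^ ('d \<times> 'n) ^ ('d \<times> 'n))"
        assume "q \<in> {(m, C). cov_matrix C}"
        then obtain m C where q: "q = (m, C)" and C: "cov_matrix C" by auto
        show "(INF p \<in> {(ft, m, C). feasible f ft \<and> cov_matrix C}.
            rel_ent (fst p) (gauss_density (fst (snd p)) (snd (snd p))))
          \<le> ereal (1 / fact CARD('n)) * rel_ent (sym_sum f) (sym_sum (gauss_density (fst q) (snd q)))"
          using P1[OF C] C unfolding q
          by (intro INF_lower2[of "(Topt f (gauss_density m C), m, C)"]) auto
      qed
      show "(INF q \<in> {(m, C). cov_matrix C}.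
            ereal (1 / fact CARD('n)) * rel_ent (sym_sum f) (sym_sum (gauss_density (fst q) (snd q))))
         \<le> (INF p \<in> {(ft, m, C). feasible f ft \<and> cov_matrix C}.
            rel_ent (fst p) (gauss_density (fst (snd p)) (snd (snd p))))"
      proof (rule INF_greatest)
        fix p :: "(('d, 'n) jstate \<Rightarrow> real) \<times> (('d, 'n) jstate \<times> (real ^ ('d \<times> 'n) ^ ('d \<times> 'n)))"
        assume "p \<in> {(ft, m, C). feasible f ft \<and> cov_matrix C}"
        then obtain ft m C where p: "p = (ft, m, C)" and C: "cov_matrix C" and fe: "feasible f ft" by auto
        show "(INF q \<in> {(m, C). cov_matrix C}.
            ereal (1 / fact CARD('n)) * rel_ent (sym_sum f) (sym_sum (gauss_density (fst q) (snd q))))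
          \<le> rel_ent (fst p) (gauss_density (fst (snd p)) (snd (snd p)))"
          using P2[OF C fe] C unfolding p
          by (intro INF_lower2[of "(m, C)"]) auto
      qed
    qed
  qed
qed

end
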